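(* Let $H$ be a connected graph that is isomorphic neither to $K_4$ nor to the diamond. Then any two distinct strong triangles of $H$ are edge-disjoint.
   Context: A triangle $T$ of $H$ is strong if every maximal matching of $H$ contains an edge of $T$. The diamond is the graph with vertices $a,b,c,d$ and edges $ab,ac,bc,bd,cd$. *)

theory Defs
  imports Main
begin

definition simple_graph :: "'a set \<Rightarrow> 'a set set \<Rightarrow> bool" where
  "simple_graph V E \<longleftrightarrow> finite V \<and>
     (\<forall>e\<in>E. \<exists>u v. u \<in> V \<and> v \<in> V \<and> u \<noteq> v \<and> e = {u, v})"

inductive reachable :: "'a set set \<Rightarrow> 'a \<Rightarrow> 'a \<Rightarrow> bool" for E where
  refl: "reachable E u u"
| step: "reachable E u v \<Longrightarrow> {v, w} \<in> E \<Longrightarrow> reachable E u w"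

definition connected_graph :: "'a set \<Rightarrow> 'a set set \<Rightarrow> bool" where
  "connected_graph V E \<longleftrightarrow> simple_graph V E \<and> V \<noteq> {} \<and>
     (\<forall>u\<in>V. \<forall>v\<in>V. reachable E u v)"

definition graph_iso :: "'a set \<Rightarrow> 'a set set \<Rightarrow> 'b set \<Rightarrow> 'b set set \<Rightarrow> bool" where
  "graph_iso V E V' E' \<longleftrightarrow> (\<exists>f. bij_betw f V V' \<and>
     (\<forall>u\<in>V. \<forall>v\<in>V. {u, v} \<in> E \<longleftrightarrow> {f u, f v} \<in> E'))"

definition K4_V :: "nat set" where "K4_V = {0, 1, 2, 3}"
definition K4_E :: "nat set set" where
  "K4_E = {{0,1},{0,2},{0,3},{1,2},{1,3},{2,3}}"

definition diamond_V :: "nat set" where "diamond_V = {0, 1, 2, 3}"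
definition diamond_E :: "nat set set" where
  "diamond_E = {{0,1},{0,2},{1,2},{1,3},{2,3}}"

definition matching :: "'a set set \<Rightarrow> 'a set set \<Rightarrow> bool" where
  "matching E M \<longleftrightarrow> M \<subseteq> E \<and> (\<forall>e\<in>M. \<forall>e'\<in>M. e \<noteq> e' \<longrightarrow> e \<inter> e' = {})"

definition maximal_matching :: "'a set set \<Rightarrow> 'a set set \<Rightarrow> bool" where
  "maximal_matching E M \<longleftrightarrow> matching E M \<and>
     (\<forall>M'. matching E M' \<and> M \<subseteq> M' \<longrightarrow> M' = M)"

definition triangle :: "'a set set \<Rightarrow> 'a set \<Rightarrow> bool" where
  "triangle E T \<longleftrightarrow> (\<exists>a b c. a \<noteq> b \<and> a \<noteq> c \<and> b \<noteq> c \<and> T = {a, b, c} \<and>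
     {a, b} \<in> E \<and> {a, c} \<in> E \<and> {b, c} \<in> E)"

definition tri_edges :: "'a set \<Rightarrow> 'a set set" where
  "tri_edges T = {e. e \<subseteq> T \<and> card e = 2}"

definition strong_triangle :: "'a set set \<Rightarrow> 'a set \<Rightarrow> bool" where
  "strong_triangle E T \<longleftrightarrow> triangle E T \<and>
     (\<forall>M. maximal_matching E M \<longrightarrow> M \<inter> tri_edges T \<noteq> {})"

end

theory Submission imports Defs begin
lemma extend_matching:
  assumes "finite E" "matching E M0"
  shows "\<exists>M. maximal_matching E M \<and> M0 \<subseteq> M"
proof -
  let ?S = "{M. matching E M \<and> M0 \<subseteq> M}"
  have fin: "finite ?S" by (rule finite_subset[of _ "Pow E"]) (use assms(1) in \<open>auto simp: matching_def\<close>)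
  have ne: "?S \<noteq> {}" using assms(2) by auto
  obtain M where M: "M \<in> ?S" "\<forall>b\<in>?S. M \<le> b \<longrightarrow> M = b"
    using finite_has_maximal[OF fin ne] by blast
  have "maximal_matching E M" unfolding maximal_matching_def using M by auto
  then show ?thesis using M by auto
qed

lemma tri_edges3:
  assumes "a \<noteq> b" "a \<noteq> c" "b \<noteq> c"
  shows "tri_edges {a,b,c} = {{a,b},{a,c},{b,c}}"
proof (rule set_eqI)
  fix e
  show "e \<in> tri_edges {a,b,c} \<longleftrightarrow> e \<in> {{a,b},{a,c},{b,c}}"
  proof
    assume "e \<in> tri_edges {a,b,c}"
    then obtain x y where "e = {x,y}" "x \<noteq> y" "x \<in> {a,b,c}" "y \<in> {a,b,c}"
      unfolding tri_edges_def card_2_iff by auto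
    then show "e \<in> {{a,b},{a,c},{b,c}}" by (auto simp: insert_commute)
  next
    assume "e \<in> {{a,b},{a,c},{b,c}}"
    then show "e \<in> tri_edges {a,b,c}" using assms unfolding tri_edges_def by auto
  qed
qed

lemma kill:
  assumes "strong_triangle E T" "finite E" "e1 \<in> E" "e2 \<in> E" "e1 \<inter> e2 = {}"
    "\<not> e1 \<subseteq> T" "\<not> e2 \<subseteq> T"
    "\<forall>f\<in>tri_edges T. f \<inter> e1 \<noteq> {} \<or> f \<inter> e2 \<noteq> {}"
  shows False
proof -
  have "matching E {e1,e2}" using assms(3-5) unfolding matching_def by auto
  then obtain M where M: "maximal_matching E M" "{e1,e2} \<subseteq> M"
    using extend_matching assms(2) by blast
  then obtain f where f: "f \<in> M" "f \<in> tri_edges T"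
    using assms(1) unfolding strong_triangle_def by blast
  have "f \<noteq> e1" "f \<noteq> e2" using f(2) assms(6,7) unfolding tri_edges_def by auto
  moreover have "matching E M" using M(1) unfolding maximal_matching_def by simp
  ultimately have "f \<inter> e1 = {}" "f \<inter> e2 = {}" using M(2) f(1) unfolding matching_def by auto
  then show False using assms(8) f(2) by blast
qed

lemma tri_split:
  assumes "triangle E T" "u \<in> T" "v \<in> T" "u \<noteq> v"
  shows "\<exists>c. c \<noteq> u \<and> c \<noteq> v \<and> T = {u,v,c} \<and> {u,v} \<in> E \<and> {u,c} \<in> E \<and> {v,c} \<in> E"
proof -
  obtain a b c where h: "a \<noteq> b" "a \<noteq> c" "b \<noteq> c" "T = {a, b, c}"
     "{a, b} \<in> E" "{a, c} \<in> E" "{b, c} \<in> E" using assms(1) unfolding triangle_def by blast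
  have u: "u = a \<or> u = b \<or> u = c" and v: "v = a \<or> v = b \<or> v = c" using h(4) assms(2,3) by auto
  show ?thesis
  proof (cases "u = a")
    case True
    then show ?thesis using h v assms(4) by (elim disjE) (auto simp: insert_commute)
  next
    case False
    then show ?thesis using h u v assms(4) by (elim disjE) (auto simp: insert_commute)
  qed
qed

lemma edge_in_V:
  assumes "simple_graph V E" "{x,y} \<in> E"
  shows "x \<in> V \<and> y \<in> V \<and> x \<noteq> y"
proof -
  obtain u v where "u \<in> V" "v \<in> V" "u \<noteq> v" "{x,y} = {u,v}"
    using assms unfolding simple_graph_def by blast
  then show ?thesis by (auto simp: doubleton_eq_iff)
qed

lemma core_V:
  assumes conn: "connected_graph V E"
    and d: "a \<noteq> b" "a \<noteq> c" "a \<noteq> d" "b \<noteq> c" "b \<noteq> d" "c \<noteq> d"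
    and e: "{a,b} \<in> E" "{a,c} \<in> E" "{b,c} \<in> E" "{a,d} \<in> E" "{b,d} \<in> E"
    and s1: "strong_triangle E {a,b,c}" and s2: "strong_triangle E {a,b,d}"
  shows "V = {a,b,c,d}"
proof -
  have sg: "simple_graph V E" using conn unfolding connected_graph_def by auto
  have finE: "finite E"
  proof -
    have "E \<subseteq> Pow V" using sg unfolding simple_graph_def by auto
    moreover have "finite V" using sg unfolding simple_graph_def by auto
    ultimately show ?thesis by (meson finite_Pow_iff finite_subset)
  qed
  have T1: "tri_edges {a,b,c} = {{a,b},{a,c},{b,c}}" using d tri_edges3 by metis
  have T2: "tri_edges {a,b,d} = {{a,b},{a,d},{b,d}}" using d tri_edges3 by metis
  have stp: "x \<in> {a,b,c,d}" if w: "w \<in> {a,b,c,d}" and wx: "{w,x} \<in> E" for w x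
  proof (rule ccontr)
    assume x: "x \<notin> {a,b,c,d}"
    from w consider "w = a" | "w = b" | "w = c" | "w = d" by blast
    then show False
    proof cases
      case 1
      show False
        by (rule kill[OF s1 finE, of "{a,x}" "{b,d}"]) (use 1 wx x d e T1 in auto)
    next
      case 2
      show False
        by (rule kill[OF s1 finE, of "{b,x}" "{a,d}"]) (use 2 wx x d e T1 in auto)
    next
      case 3
      show False
        by (rule kill[OF s1 finE, of "{c,x}" "{a,d}"]) (use 3 wx x d e T1 in auto)
    next
      case 4
      show False
        by (rule kill[OF s2 finE, of "{d,x}" "{a,c}"]) (use 4 wx x d e T2 in auto)
    qed
  qed
  have R0: "u = a \<Longrightarrow> v \<in> {a,b,c,d}" if "reachable E u v" for u v
    using that
  proof (induct rule: reachable.induct)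
    case refl
    then show ?case by simp
  next
    case (step u v w)
    then show ?case using stp[of v w] by simp
  qed
  have R: "v \<in> {a,b,c,d}" if "reachable E a v" for v using R0 that by blast
  have "a \<in> V" "b \<in> V" "c \<in> V" "d \<in> V"
    using edge_in_V[OF sg e(1)] edge_in_V[OF sg e(4)] edge_in_V[OF sg e(3)] by auto
  moreover have "V \<subseteq> {a,b,c,d}" using R \<open>a \<in> V\<close> conn unfolding connected_graph_def by blast
  ultimately show ?thesis by blast
qed

lemma iso_gen:
  fixes f :: "'a \<Rightarrow> nat"
  assumes sg: "simple_graph V E" and V: "V = {a,b,c,d}"
    and d: "a \<noteq> b" "a \<noteq> c" "a \<noteq> d" "b \<noteq> c" "b \<noteq> d" "c \<noteq> d"
    and f: "f a = pa" "f b = pb" "f c = pc" "f d = pd"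
    and fd: "distinct [pa,pb,pc,pd]"
    and W: "W = {pa,pb,pc,pd}"
    and loops: "\<forall>x. {x} \<notin> F"
    and ab: "{a,b} \<in> E \<longleftrightarrow> {pa,pb} \<in> F"
    and ac: "{a,c} \<in> E \<longleftrightarrow> {pa,pc} \<in> F"
    and ad: "{a,d} \<in> E \<longleftrightarrow> {pa,pd} \<in> F"
    and bc: "{b,c} \<in> E \<longleftrightarrow> {pb,pc} \<in> F"
    and bd: "{b,d} \<in> E \<longleftrightarrow> {pb,pd} \<in> F"
    and cd: "{c,d} \<in> E \<longleftrightarrow> {pc,pd} \<in> F"
  shows "graph_iso V E W F"
  unfolding graph_iso_def
proof (intro exI conjI)
  show "bij_betw f V W" unfolding bij_betw_def inj_on_def V W using d f fd by auto
  have nl: "{x} \<notin> E" for x using edge_in_V[OF sg, of x x] by auto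
  show "\<forall>u\<in>V. \<forall>v\<in>V. ({u, v} \<in> E) = ({f u, f v} \<in> F)"
    using V f nl loops ab ac ad bc bd cd by (auto simp: insert_commute)
qed

lemma K4_ok: "graph_iso V E K4_V K4_E"
  if sg: "simple_graph V E" and V: "V = {a,b,c,d}"
    and d: "a \<noteq> b" "a \<noteq> c" "a \<noteq> d" "b \<noteq> c" "b \<noteq> d" "c \<noteq> d"
    and e: "{a,b} \<in> E" "{a,c} \<in> E" "{b,c} \<in> E" "{a,d} \<in> E" "{b,d} \<in> E" "{c,d} \<in> E"
  for V E and a b c d :: 'a
proof -
  define f where "f x = (if x = a then 0 else if x = b then 1 else if x = c then 2 else (3::nat))" for x
  show ?thesis
    by (rule iso_gen[OF sg V d, of f 0 1 2 3]) (use d e in \<open>auto simp: f_def K4_V_def K4_E_def doubleton_eq_iff\<close>)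
qed

lemma diamond_ok: "graph_iso V E diamond_V diamond_E"
  if sg: "simple_graph V E" and V: "V = {a,b,c,d}"
    and d: "a \<noteq> b" "a \<noteq> c" "a \<noteq> d" "b \<noteq> c" "b \<noteq> d" "c \<noteq> d"
    and e: "{a,b} \<in> E" "{a,c} \<in> E" "{b,c} \<in> E" "{a,d} \<in> E" "{b,d} \<in> E" "{c,d} \<notin> E"
  for V E and a b c d :: 'a
proof -
  define f where "f x = (if x = a then 1 else if x = b then 2 else if x = c then 0 else (3::nat))" for x
  show ?thesis
    by (rule iso_gen[OF sg V d, of f 1 2 0 3]) (use d e in \<open>auto simp: f_def diamond_V_def diamond_E_def doubleton_eq_iff\<close>)
qed

theorem mainTheorem16:
  fixes V :: "'a set" and E :: "'a set set"
  assumes "connected_graph V E"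
    and "\<not> graph_iso V E K4_V K4_E"
    and "\<not> graph_iso V E diamond_V diamond_E"
    and "strong_triangle E T1" and "strong_triangle E T2"
    and "T1 \<noteq> T2"
  shows "tri_edges T1 \<inter> tri_edges T2 = {}"
proof (rule ccontr)
  assume "tri_edges T1 \<inter> tri_edges T2 \<noteq> {}"
  then obtain ee where "ee \<in> tri_edges T1" "ee \<in> tri_edges T2" by blast
  then obtain u v where uv: "u \<noteq> v" "u \<in> T1" "v \<in> T1" "u \<in> T2" "v \<in> T2"
    unfolding tri_edges_def card_2_iff by auto
  have t1: "triangle E T1" and t2: "triangle E T2"
    using assms(4,5) unfolding strong_triangle_def by auto
  obtain c where c: "c \<noteq> u" "c \<noteq> v" "T1 = {u,v,c}" "{u,v} \<in> E" "{u,c} \<in> E" "{v,c} \<in> E"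
    using tri_split[OF t1 uv(2,3,1)] by blast
  obtain d where d: "d \<noteq> u" "d \<noteq> v" "T2 = {u,v,d}" "{u,d} \<in> E" "{v,d} \<in> E"
    using tri_split[OF t2 uv(4,5,1)] by blast
  have cd: "c \<noteq> d" using c(3) d(3) assms(6) by auto
  have sg: "simple_graph V E" using assms(1) unfolding connected_graph_def by auto
  have V: "V = {u,v,c,d}"
    by (rule core_V[OF assms(1) uv(1) c(1)[symmetric] d(1)[symmetric] c(2)[symmetric] d(2)[symmetric] cd
          c(4,5,6) d(4,5)]) (use assms(4,5) c(3) d(3) in auto)
  show False
  proof (cases "{c,d} \<in> E")
    case True
    then show False using K4_ok[OF sg V uv(1) c(1)[symmetric] d(1)[symmetric] c(2)[symmetric] d(2)[symmetric] cd
          c(4,5,6) d(4,5)] assms(2) by blast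
  next
    case False
    then show False using diamond_ok[OF sg V uv(1) c(1)[symmetric] d(1)[symmetric] c(2)[symmetric] d(2)[symmetric] cd
          c(4,5,6) d(4,5)] assms(3) by blast
  qed
qed
end
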